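(* Let $\tau,t\in\mathbb{R}$ and let $\beta_n=\beta_n(\tau,t)$ be the recurrence coefficients of the monic orthogonal polynomials for the weight $\omega(x;\tau,t)=\exp(-x^6+\tau x^4+tx^2)$ on $\mathbb{R}$. Then for $n\ge1$ \begin{align*} 6\beta_n\big(&\beta_{n-2}\beta_{n-1}+\beta_{n-1}^2+2\beta_{n-1}\beta_n+\beta_{n-1}\beta_{n+1}+\beta_n^2+2\beta_n\beta_{n+1}+\beta_{n+1}^2+\beta_{n+1}\beta_{n+2}\big)\\ &-4\tau\beta_n(\beta_{n-1}+\beta_n+\beta_{n+1})-2t\beta_n=n. \end{align*}
   Context: The monic orthogonal polynomials satisfy $P_{n+1}(x)=xP_n(x)-\beta_nP_{n-1}(x)$ with $P_{-1}=0$, $P_0=1$, where $\beta_n>0$ for $n\ge1$. The convention $\beta_0=\beta_{-1}=0$ is used. *)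

theory Defs
  imports "HOL-Analysis.Analysis" "HOL-Computational_Algebra.Polynomial"
begin

definition weight :: "real \<Rightarrow> real \<Rightarrow> real \<Rightarrow> real" where
  "weight \<tau> t x = exp (- (x ^ 6) + \<tau> * x ^ 4 + t * x ^ 2)"

definition wip :: "real \<Rightarrow> real \<Rightarrow> real poly \<Rightarrow> real poly \<Rightarrow> real" where
  "wip \<tau> t p q = (\<integral>x. poly p x * poly q x * weight \<tau> t x \<partial>lborel)"

definition is_mop :: "real \<Rightarrow> real \<Rightarrow> nat \<Rightarrow> real poly \<Rightarrow> bool" where
  "is_mop \<tau> t n p \<longleftrightarrow> degree p = n \<and> lead_coeff p = 1 \<and>
     (\<forall>k<n. wip \<tau> t p (monom 1 k) = 0)"

definition mop :: "real \<Rightarrow> real \<Rightarrow> nat \<Rightarrow> real poly" where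
  "mop \<tau> t n = (THE p. is_mop \<tau> t n p)"

definition beta :: "real \<Rightarrow> real \<Rightarrow> int \<Rightarrow> real" where
  "beta \<tau> t n = (if n \<le> 0 then 0 else
     (THE b. mop \<tau> t (nat n + 1) = [:0, 1:] * mop \<tau> t (nat n) - smult b (mop \<tau> t (nat n - 1))))"

end

theory Submission
  imports Defs "HOL-Probability.Probability"
begin

lemma poly6_bound:
  fixes \<tau> s :: real
  shows "\<exists>M. \<forall>y::real. y \<ge> 0 \<longrightarrow> - (y^3) + \<tau> * y^2 + s * y \<le> M"
proof -
  define A where "A = 1 + \<bar>\<tau>\<bar> + \<bar>s\<bar>"
  have A1: "A \<ge> 1" unfolding A_def by simp
  show ?thesis
  proof (intro exI allI impI)
    fix y :: real assume y: "y \<ge> 0"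
    have t1: "\<tau> * y^2 \<le> \<bar>\<tau>\<bar> * y^2" by (simp add: mult_right_mono)
    have t2: "s * y \<le> \<bar>s\<bar> * y" using y by (simp add: mult_right_mono)
    show "- (y^3) + \<tau> * y^2 + s * y \<le> \<bar>\<tau>\<bar> * A^2 + \<bar>s\<bar> * A"
    proof (cases "y \<ge> A")
      case True
      then have y1: "y \<ge> 1" using A1 by linarith
      have "y^3 = y * y^2" by (simp add: power2_eq_square power3_eq_cube)
      also have "\<dots> \<ge> A * y^2" using True by (simp add: mult_right_mono)
      finally have "y^3 \<ge> A * y^2" .
      moreover have "\<bar>s\<bar> * y \<le> \<bar>s\<bar> * y^2" using y1
        by (simp add: mult_left_mono power2_eq_square)
      moreover have "A * y^2 = y^2 + \<bar>\<tau>\<bar> * y^2 + \<bar>s\<bar> * y^2"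
        unfolding A_def by (simp add: algebra_simps)
      moreover have "y^2 \<ge> 0" by simp
      ultimately have "- (y^3) + \<bar>\<tau>\<bar> * y^2 + \<bar>s\<bar> * y \<le> 0"
        by linarith
      moreover have "0 \<le> \<bar>\<tau>\<bar> * A^2 + \<bar>s\<bar> * A" using A1 by simp
      ultimately show ?thesis using t1 t2 by linarith
    next
      case False
      have "y^2 \<le> A^2" using False y by (simp add: power_mono)
      then have "\<bar>\<tau>\<bar> * y^2 \<le> \<bar>\<tau>\<bar> * A^2" by (simp add: mult_left_mono)
      moreover have "\<bar>s\<bar> * y \<le> \<bar>s\<bar> * A" using False by (simp add: mult_left_mono)
      moreover have "y^3 \<ge> 0" using y by simp
      ultimately show ?thesis using t1 t2 by linarith
    qed
  qed
qed

lemma weight_bound: "\<exists>C>0. \<forall>x. weight \<tau> t x \<le> C * std_normal_density x"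
proof -
  obtain M where M: "\<And>y::real. y \<ge> 0 \<Longrightarrow> - (y^3) + \<tau> * y^2 + (t + 1/2) * y \<le> M"
    using poly6_bound by blast
  have "weight \<tau> t x \<le> (exp M * sqrt (2 * pi)) * std_normal_density x" for x
  proof -
    have "- (x ^ 6) + \<tau> * x ^ 4 + t * x ^ 2 \<le> M - x^2/2"
      using M[of "x^2"] by (simp add: power_mult[symmetric] algebra_simps)
    then have "weight \<tau> t x \<le> exp (M - x^2/2)" unfolding weight_def by simp
    also have "\<dots> = exp M * exp (- (x^2) / 2)"
      by (simp add: exp_add[symmetric])
    also have "\<dots> = (exp M * sqrt (2 * pi)) * std_normal_density x"
      by (simp add: normal_density_def)
    finally show ?thesis .
  qed
  then show ?thesis by (intro exI[of _ "exp M * sqrt (2 * pi)"]) auto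
qed

lemma weight_pos: "weight \<tau> t x > 0" by (simp add: weight_def)

lemma weight_even: "weight \<tau> t (-x) = weight \<tau> t x" by (simp add: weight_def)

lemma weight_meas[measurable]: "weight \<tau> t \<in> borel_measurable borel"
  unfolding weight_def by measurable

lemma poly_meas[measurable]: "poly (p::real poly) \<in> borel_measurable borel"
  using continuous_on_poly[OF continuous_on_id, of UNIV p]
  by (intro borel_measurable_continuous_onI) (simp add: id_def)

lemma integrable_monom_weight: "integrable lborel (\<lambda>x. x^k * weight \<tau> t x)"
proof -
  obtain C where C: "C > 0" "\<And>x. weight \<tau> t x \<le> C * std_normal_density x"
    using weight_bound by blast
  show ?thesis
  proof (rule Bochner_Integration.integrable_bound)
    show "integrable lborel (\<lambda>x. C * (std_normal_density x * \<bar>x\<bar>^k))"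
      using integrable_std_normal_moment_abs by simp
    show "(\<lambda>x. x^k * weight \<tau> t x) \<in> borel_measurable lborel" by measurable
    show "AE x in lborel. norm (x^k * weight \<tau> t x) \<le> norm (C * (std_normal_density x * \<bar>x\<bar>^k))"
    proof (intro AE_I2)
      fix x :: real
      have "norm (x^k * weight \<tau> t x) = \<bar>x\<bar>^k * weight \<tau> t x"
        using weight_pos[of \<tau> t x] by (simp add: abs_mult power_abs)
      also have "\<dots> \<le> \<bar>x\<bar>^k * (C * std_normal_density x)"
        using C(2)[of x] by (simp add: mult_left_mono)
      also have "\<dots> = norm (C * (std_normal_density x * \<bar>x\<bar>^k))"
        using C(1) by (simp add: abs_mult normal_density_nonneg)
      finally show "norm (x^k * weight \<tau> t x) \<le> norm (C * (std_normal_density x * \<bar>x\<bar>^k))" .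
    qed
  qed
qed

lemma integrable_poly_weight: "integrable lborel (\<lambda>x. poly p x * weight \<tau> t x)"
proof -
  have "integrable lborel (\<lambda>x. \<Sum>i\<le>degree p. coeff p i * (x^i * weight \<tau> t x))"
    by (intro Bochner_Integration.integrable_sum integrable_mult_right integrable_monom_weight)
  then show ?thesis
    by (simp add: poly_altdef sum_distrib_right mult.assoc)
qed

lemma integrable_wip: "integrable lborel (\<lambda>x. poly p x * poly q x * weight \<tau> t x)"
  using integrable_poly_weight[of "p * q" \<tau> t] by simp

lemma wip_sym: "wip \<tau> t p q = wip \<tau> t q p"
  unfolding wip_def by (simp add: mult_ac)

lemma wip_add_left: "wip \<tau> t (p + q) r = wip \<tau> t p r + wip \<tau> t q r"
  unfolding wip_def by (simp add: distrib_right integral_add integrable_wip)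

lemma wip_diff_left: "wip \<tau> t (p - q) r = wip \<tau> t p r - wip \<tau> t q r"
  unfolding wip_def by (simp add: left_diff_distrib integral_diff integrable_wip)

lemma wip_smult_left: "wip \<tau> t (smult c p) q = c * wip \<tau> t p q"
  unfolding wip_def by (simp add: mult.assoc)

lemma wip_zero_left [simp]: "wip \<tau> t 0 q = 0"
  unfolding wip_def by simp

lemma wip_x: "wip \<tau> t ([:0,1:] * p) q = wip \<tau> t p ([:0,1:] * q)"
  unfolding wip_def by (simp add: mult_ac)

lemma wip_monoms: "wip \<tau> t p q = (\<Sum>i\<le>degree q. coeff q i * wip \<tau> t p (monom 1 i))"
proof -
  have "wip \<tau> t p q = (\<integral>x. (\<Sum>i\<le>degree q. coeff q i * (poly p x * poly (monom 1 i) x * weight \<tau> t x)) \<partial>lborel)"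
    unfolding wip_def
    by (intro Bochner_Integration.integral_cong refl)
       (simp add: poly_altdef[of q] poly_monom sum_distrib_left sum_distrib_right mult_ac)
  also have "\<dots> = (\<Sum>i\<le>degree q. coeff q i * wip \<tau> t p (monom 1 i))"
    unfolding wip_def
    by (subst Bochner_Integration.integral_sum) (auto intro: integrable_wip)
  finally show ?thesis .
qed

lemma wip_orth:
  assumes "\<forall>k<n. wip \<tau> t p (monom 1 k) = 0" "degree q < n"
  shows "wip \<tau> t p q = 0"
  using assms by (subst wip_monoms) auto

lemma wip_pos:
  assumes "p \<noteq> 0" shows "wip \<tau> t p p > 0"
proof -
  have nn: "AE x in lborel. 0 \<le> poly p x * poly p x * weight \<tau> t x"
    by (intro AE_I2 mult_nonneg_nonneg zero_le_square less_imp_le weight_pos)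
  have ge: "wip \<tau> t p p \<ge> 0" unfolding wip_def using nn by (rule integral_nonneg_AE)
  show ?thesis
  proof (rule ccontr)
    assume "\<not> ?thesis"
    with ge have "wip \<tau> t p p = 0" by simp
    then have "AE x in lborel. poly p x * poly p x * weight \<tau> t x = 0"
      unfolding wip_def using integral_nonneg_eq_0_iff_AE[OF integrable_wip nn] by simp
    then have "AE x in lborel. x \<in> {x. poly p x = 0}"
    proof (rule AE_mp)
      show "AE x in lborel. poly p x * poly p x * weight \<tau> t x = 0
              \<longrightarrow> x \<in> {x. poly p x = 0}"
        using weight_pos[of \<tau> t] by (intro AE_I2) (auto simp: less_le)
    qed
    moreover have "AE x in lborel. x \<notin> {x. poly p x = 0}"
      using assms poly_roots_finite[of p]
      by (intro AE_not_in countable_imp_null_set_lborel countable_finite) auto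
    ultimately have "AE x in lborel. x \<in> {x. poly p x = 0} \<and> x \<notin> {x. poly p x = 0}"
      by (simp only: AE_conj_iff)
    then have "AE (x::real) in lborel. False" by simp
    then have "ae_filter lborel = (bot :: real filter)" using trivial_limit_def by blast
    then show False by (simp add: ae_filter_eq_bot_iff)
  qed
qed

lemma integral_odd:
  fixes f :: "real \<Rightarrow> real"
  assumes "\<And>x. f (-x) = - f x"
  shows "(\<integral>x. f x \<partial>lborel) = 0"
proof -
  have "(\<integral>x. f x \<partial>lborel) = \<bar>-1\<bar> *\<^sub>R (\<integral>x. f (0 + (-1) * x) \<partial>lborel)"
    by (rule lborel_integral_real_affine) simp
  also have "\<dots> = - (\<integral>x. f x \<partial>lborel)" using assms by simp
  finally show ?thesis by simp
qed

lemma weight_exp_bound: "\<exists>D>0. \<forall>x. weight \<tau> t x \<le> D * exp (- \<bar>x\<bar>)"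
proof -
  obtain C where C: "C > 0" "\<And>x. weight \<tau> t x \<le> C * std_normal_density x"
    using weight_bound by blast
  have "weight \<tau> t x \<le> (C * exp (1/2)) * exp (- \<bar>x\<bar>)" for x
  proof -
    have s1: "sqrt (2 * pi) \<ge> 1" using pi_gt3 by (simp add: real_le_rsqrt)
    have "std_normal_density x = exp (- (x^2) / 2) / sqrt (2 * pi)"
      by (simp add: normal_density_def)
    also have "\<dots> \<le> exp (- (x^2) / 2)"
      using s1 by (simp add: divide_le_eq)
    also have "\<dots> \<le> exp (1/2 + - \<bar>x\<bar>)"
    proof -
      have "(\<bar>x\<bar> - 1)^2 \<ge> 0" by simp
      then have "- (x^2) / 2 \<le> 1/2 + - \<bar>x\<bar>"
        by (simp add: power2_eq_square algebra_simps abs_mult_self_eq)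
      then show ?thesis by simp
    qed
    also have "\<dots> = exp (1/2) * exp (- \<bar>x\<bar>)" by (simp only: exp_add)
    finally have "std_normal_density x \<le> exp (1/2) * exp (- \<bar>x\<bar>)" .
    then have "C * std_normal_density x \<le> C * (exp (1/2) * exp (- \<bar>x\<bar>))"
      using C(1) by (simp add: mult_left_mono)
    then show ?thesis using C(2)[of x] by simp
  qed
  then show ?thesis using C(1) by (intro exI[of _ "C * exp (1/2)"]) auto
qed

lemma monom_weight_top: "((\<lambda>x. x^i * weight \<tau> t x) \<longlongrightarrow> 0) at_top"
proof -
  obtain D where D: "D > 0" "\<And>x. weight \<tau> t x \<le> D * exp (- \<bar>x\<bar>)"
    using weight_exp_bound by blast
  show ?thesis
  proof (rule Lim_null_comparison)
    show "((\<lambda>x. D * (x^i / exp x)) \<longlongrightarrow> 0) at_top"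
      using tendsto_mult_right_zero[OF tendsto_power_div_exp_0[of i], of D] by simp
    show "\<forall>\<^sub>F x in at_top. norm (x^i * weight \<tau> t x) \<le> D * (x^i / exp x)"
      using eventually_ge_at_top[of 0]
    proof eventually_elim
      case (elim x)
      have "norm (x^i * weight \<tau> t x) = x^i * weight \<tau> t x"
        using elim weight_pos[of \<tau> t x] by simp
      also have "\<dots> \<le> x^i * (D * exp (- \<bar>x\<bar>))"
        using elim D(2)[of x] by (simp add: mult_left_mono)
      also have "\<dots> = D * (x^i / exp x)" using elim by (simp add: exp_minus field_simps)
      finally show ?case .
    qed
  qed
qed

lemma monom_weight_bot: "((\<lambda>x. x^i * weight \<tau> t x) \<longlongrightarrow> 0) at_bot"
  unfolding filterlim_at_bot_mirror
proof -
  have h: "((\<lambda>x. (-1)^i * (x^i * weight \<tau> t x)) \<longlongrightarrow> 0) at_top"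
    by (rule tendsto_mult_right_zero[OF monom_weight_top])
  show "((\<lambda>x. (-x)^i * weight \<tau> t (-x)) \<longlongrightarrow> 0) at_top"
  proof -
    have e: "(-x)^i * weight \<tau> t (-x) = (-1)^i * (x^i * weight \<tau> t x)" for x :: real
    proof -
      have "(-x)^i = (-1)^i * x^i" by (metis mult_minus1 power_mult_distrib)
      then show ?thesis by (simp only: weight_even mult.assoc)
    qed
    show ?thesis unfolding e by (rule h)
  qed
qed

lemma poly_weight_lim:
  "((\<lambda>x. poly r x * weight \<tau> t x) \<longlongrightarrow> 0) at_top"
  "((\<lambda>x. poly r x * weight \<tau> t x) \<longlongrightarrow> 0) at_bot"
proof -
  have eq: "(\<lambda>x. poly r x * weight \<tau> t x) = (\<lambda>x. \<Sum>i\<le>degree r. coeff r i * (x^i * weight \<tau> t x))"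
    by (simp add: poly_altdef sum_distrib_right mult.assoc)
  show "((\<lambda>x. poly r x * weight \<tau> t x) \<longlongrightarrow> 0) at_top"
    unfolding eq by (intro tendsto_null_sum tendsto_mult_right_zero monom_weight_top)
  show "((\<lambda>x. poly r x * weight \<tau> t x) \<longlongrightarrow> 0) at_bot"
    unfolding eq by (intro tendsto_null_sum tendsto_mult_right_zero monom_weight_bot)
qed

definition Vp :: "real \<Rightarrow> real \<Rightarrow> real poly" where
  "Vp \<tau> t = [:0, -2*t, 0, -4*\<tau>, 0, 6:]"

lemma poly_Vp: "poly (Vp \<tau> t) x = 6 * x^5 - 4 * \<tau> * x^3 - 2 * t * x"
  by (simp add: Vp_def algebra_simps power_numeral_reduce)

lemma weight_deriv: "DERIV (weight \<tau> t) x :> - poly (Vp \<tau> t) x * weight \<tau> t x"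
proof -
  have "DERIV (\<lambda>x. exp (- (x ^ 6) + \<tau> * x ^ 4 + t * x ^ 2)) x :>
     exp (- (x ^ 6) + \<tau> * x ^ 4 + t * x ^ 2) * (- (6 * x^5) + \<tau> * (4 * x^3) + t * (2 * x))"
    by (auto intro!: derivative_eq_intros)
  then show ?thesis unfolding weight_def[abs_def] poly_Vp by (simp add: algebra_simps)
qed

lemma ibp: "wip \<tau> t (pderiv r) 1 = wip \<tau> t r (Vp \<tau> t)"
proof -
  define f where "f x = poly (pderiv r) x * weight \<tau> t x - poly r x * poly (Vp \<tau> t) x * weight \<tau> t x" for x
  define F where "F x = poly r x * weight \<tau> t x" for x
  have Fd: "(F has_vector_derivative f x) (at x)" for x
  proof -
    have "DERIV F x :> f x"
      unfolding F_def f_def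
      using DERIV_mult[OF poly_DERIV[of r x] weight_deriv[of \<tau> t x]]
      by (simp add: algebra_simps)
    then show ?thesis by (simp add: has_real_derivative_iff_has_vector_derivative)
  qed
  have fc: "isCont f x" for x
    unfolding f_def weight_def by (intro continuous_intros)
  have fi: "integrable lborel f"
    unfolding f_def using integrable_wip[of "pderiv r" 1 \<tau> t] integrable_wip[of r "Vp \<tau> t" \<tau> t]
    by (intro Bochner_Integration.integrable_diff) simp_all
  have "(LBINT x=-\<infinity>..\<infinity>. f x) = 0 - 0"
  proof (rule interval_integral_FTC_integrable)
    show "set_integrable lborel (einterval (- \<infinity>) \<infinity>) f"
      using fi by (simp add: set_integrable_def)
    show "((F \<circ> real_of_ereal) \<longlongrightarrow> 0) (at_right (- \<infinity>))"
      unfolding ereal_tendsto_simps1 F_def by (rule poly_weight_lim)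
    show "((F \<circ> real_of_ereal) \<longlongrightarrow> 0) (at_left \<infinity>)"
      unfolding ereal_tendsto_simps1 F_def by (rule poly_weight_lim)
  qed (auto intro: Fd fc)
  then have "(\<integral>x. f x \<partial>lborel) = 0"
    by (simp add: interval_lebesgue_integral_def set_lebesgue_integral_def)
  then show ?thesis
    unfolding f_def wip_def
    using integrable_wip[of "pderiv r" 1 \<tau> t] integrable_wip[of r "Vp \<tau> t" \<tau> t]
    by (subst (asm) Bochner_Integration.integral_diff) simp_all
qed



lemma wip_add_right: "wip \<tau> t r (p + q) = wip \<tau> t r p + wip \<tau> t r q"
  by (simp add: wip_sym[of \<tau> t r] wip_add_left)

lemma wip_diff_right: "wip \<tau> t r (p - q) = wip \<tau> t r p - wip \<tau> t r q"
  by (simp add: wip_sym[of \<tau> t r] wip_diff_left)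

lemma wip_smult_right: "wip \<tau> t q (smult c p) = c * wip \<tau> t q p"
  by (simp add: wip_sym[of \<tau> t q] wip_smult_left)

lemma wip_zero_right [simp]: "wip \<tau> t q 0 = 0"
  by (simp add: wip_sym[of \<tau> t q])

lemma wip_mult1: "wip \<tau> t (a * b) 1 = wip \<tau> t a b"
  unfolding wip_def by simp

lemma wip_mult_assoc: "wip \<tau> t (a * b) c = wip \<tau> t a (b * c)"
  unfolding wip_def by (simp add: mult_ac)

lemma deg_red0:
  fixes q P :: "real poly"
  assumes "degree q \<le> m" "degree P = m" "lead_coeff P = 1"
  shows "degree (q - smult (coeff q m) P) < m \<or> q - smult (coeff q m) P = 0"
proof (cases "m = 0")
  case True
  then have "P = [:1:]" using assms(2,3) by (metis degree_eq_zeroE lead_coeff_pCons(2) pCons_0_0 one_pCons)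
  moreover have "q = [:coeff q 0:]" using assms(1) True by (metis degree_0_id le_zero_eq)
  ultimately have "q - smult (coeff q m) P = 0" using True by (metis diff_self smult_pCons smult_0_right mult.right_neutral)
  then show ?thesis by simp
next
  case False
  have "degree (q - smult (coeff q m) P) \<le> m - 1"
  proof (rule degree_le, intro allI impI)
    fix i assume "m - 1 < i"
    then have i: "i \<ge> m" using False by simp
    show "coeff (q - smult (coeff q m) P) i = 0"
    proof (cases "i = m")
      case True then show ?thesis using assms by simp
    next
      case False
      with i have "i > m" by simp
      then have "coeff q i = 0" "coeff P i = 0" using assms by (auto intro: coeff_eq_0)
      then show ?thesis by simp
    qed
  qed
  then show ?thesis using False by (intro disjI1) linarith
qed


lemma deg_sub_lead:
  fixes p s :: "real poly"
  assumes "degree p = D" "lead_coeff p = 1" "degree s < D"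
  shows "degree (p - s) = D \<and> lead_coeff (p - s) = 1"
proof -
  have "degree (p + - s) = degree p" using assms by (intro degree_add_eq_left) simp
  moreover have "coeff s D = 0" using assms(3) by (simp add: coeff_eq_0)
  ultimately show ?thesis using assms by simp
qed

lemma X_mult_pCons: "[:0,1:] * (r::real poly) = pCons 0 r"
  by (simp add: mult_pCons_left)

lemma neg1_sq: "(-1::real)^m * (-1)^m = 1"
  by (simp add: power_add[symmetric])

fun Q :: "real \<Rightarrow> real \<Rightarrow> nat \<Rightarrow> real poly" where
  "Q \<tau> t 0 = 1"
| "Q \<tau> t (Suc 0) = [:0, 1:]"
| "Q \<tau> t (Suc (Suc n)) = [:0, 1:] * Q \<tau> t (Suc n)
     - smult (wip \<tau> t (Q \<tau> t (Suc n)) (Q \<tau> t (Suc n)) / wip \<tau> t (Q \<tau> t n) (Q \<tau> t n)) (Q \<tau> t n)"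

lemma odd_x_wip:
  assumes "\<And>x. poly p (-x) = (-1)^m * poly p x"
  shows "wip \<tau> t ([:0,1:] * p) p = 0"
  unfolding wip_def
proof (rule integral_odd)
  fix x :: real
  have "poly ([:0, 1:] * p) (- x) * poly p (- x) * weight \<tau> t (- x)
      = - (x * poly p x * poly p x * weight \<tau> t x * ((-1)^m * (-1)^m))"
    using assms by (simp add: weight_even mult_ac)
  also have "\<dots> = - (poly ([:0, 1:] * p) x * poly p x * weight \<tau> t x)"
    by (simp add: neg1_sq)
  finally show "poly ([:0, 1:] * p) (- x) * poly p (- x) * weight \<tau> t (- x)
      = - (poly ([:0, 1:] * p) x * poly p x * weight \<tau> t x)" .
qed

lemma Q_props:
  "degree (Q \<tau> t n) = n \<and> lead_coeff (Q \<tau> t n) = 1 \<and>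
   (\<forall>q. degree q < n \<longrightarrow> wip \<tau> t (Q \<tau> t n) q = 0) \<and>
   (\<forall>x. poly (Q \<tau> t n) (-x) = (-1)^n * poly (Q \<tau> t n) x)"
proof (induction \<tau> t n rule: Q.induct)
  case (1 \<tau> t)
  then show ?case by simp
next
  case (2 \<tau> t)
  have "wip \<tau> t [:0, 1:] q = 0" if "degree q < 1" for q
  proof -
    have "q = [:coeff q 0:]" using that by (metis degree_0_id less_one)
    then have "wip \<tau> t [:0, 1:] q = coeff q 0 * wip \<tau> t ([:0,1:] * 1) 1"
      by (metis mult.right_neutral smult_one wip_smult_right)
    also have "wip \<tau> t ([:0,1:] * 1) 1 = 0"
      by (rule odd_x_wip[where m=0]) simp
    finally show ?thesis by simp
  qed
  then show ?case by simp
next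
  case (3 \<tau> t n)
  define Pm where "Pm = Q \<tau> t (Suc n)"
  define Pk where "Pk = Q \<tau> t n"
  define hm where "hm = wip \<tau> t Pm Pm"
  define hk where "hk = wip \<tau> t Pk Pk"
  define b where "b = hm / hk"
  have Qeq: "Q \<tau> t (Suc (Suc n)) = [:0,1:] * Pm - smult b Pk"
    by (simp add: Pm_def Pk_def b_def hm_def hk_def)
  note IH1 = "3.IH"(1)[folded Pm_def] and IH2 = "3.IH"(4)[folded Pk_def]
  have dPk: "degree Pk = n" and lPk: "lead_coeff Pk = 1" using IH2 by auto
  have Pk0: "Pk \<noteq> 0" using IH2 by auto
  have hk: "hk > 0" unfolding hk_def using Pk0 by (rule wip_pos)
  have degXPm: "degree ([:0,1:] * Pm) = Suc (Suc n)" "lead_coeff ([:0,1:] * Pm) = 1"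
    using IH1 by (auto simp: X_mult_pCons)
  have degsPk: "degree (smult b Pk) < Suc (Suc n)" using IH2 by simp
  have deg: "degree (Q \<tau> t (Suc (Suc n))) = Suc (Suc n) \<and> lead_coeff (Q \<tau> t (Suc (Suc n))) = 1"
    unfolding Qeq using deg_sub_lead[OF degXPm degsPk] .
  have par: "\<forall>x. poly (Q \<tau> t (Suc (Suc n))) (-x) = (-1)^(Suc (Suc n)) * poly (Q \<tau> t (Suc (Suc n))) x"
    using IH1 IH2 unfolding Qeq by (simp add: algebra_simps)
  have oddm: "wip \<tau> t ([:0,1:] * Pm) Pm = 0"
    using IH1 by (intro odd_x_wip[where m="Suc n"]) blast
  have orth: "wip \<tau> t (Q \<tau> t (Suc (Suc n))) q = 0" if q: "degree q < Suc (Suc n)" for q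
  proof -
    define c where "c = coeff q (Suc n)"
    define q1 where "q1 = q - smult c Pm"
    have "degree q1 < Suc n \<or> q1 = 0"
      unfolding q1_def c_def using IH1 q by (intro deg_red0) auto
    then have q1d: "degree q1 \<le> n" by auto
    define d where "d = coeff q1 n"
    define r where "r = q1 - smult d Pk"
    have rd: "degree r < n \<or> r = 0"
      unfolding r_def d_def using IH2 q1d by (intro deg_red0) auto
    have qeq: "q = smult c Pm + smult d Pk + r" unfolding r_def q1_def by simp
    have wr1: "wip \<tau> t Pk r = 0" using rd IH2 by auto
    have wr2: "wip \<tau> t Pm ([:0,1:] * r) = 0"
    proof (cases "r = 0")
      case False
      then have "degree ([:0,1:] * r) < Suc n" using rd by (simp add: X_mult_pCons)
      then show ?thesis using IH1 by blast
    qed simp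
    have w1: "wip \<tau> t (Q \<tau> t (Suc (Suc n))) r = 0"
      unfolding Qeq wip_diff_left wip_smult_left wip_x using wr1 wr2 by simp
    have "degree ([:0,1:] * Pk - smult (coeff ([:0,1:] * Pk) (Suc n)) Pm) < Suc n
          \<or> [:0,1:] * Pk - smult (coeff ([:0,1:] * Pk) (Suc n)) Pm = 0"
      using IH1 IH2 by (intro deg_red0) (auto simp: X_mult_pCons)
    moreover have "coeff ([:0,1:] * Pk) (Suc n) = 1" using lPk by (simp add: X_mult_pCons dPk)
    ultimately have "degree ([:0,1:] * Pk - Pm) < Suc n \<or> [:0,1:] * Pk - Pm = 0" by simp
    then have "wip \<tau> t Pm ([:0,1:] * Pk - Pm) = 0" using IH1 by auto
    then have xk: "wip \<tau> t Pm ([:0,1:] * Pk) = hm"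
      unfolding hm_def by (simp add: wip_diff_right)
    have w2: "wip \<tau> t (Q \<tau> t (Suc (Suc n))) Pk = 0"
      unfolding Qeq wip_diff_left wip_smult_left wip_x xk using hk
      by (simp add: b_def hk_def[symmetric])
    have "wip \<tau> t Pm Pk = 0" using IH1 IH2 by simp
    then have w3: "wip \<tau> t (Q \<tau> t (Suc (Suc n))) Pm = 0"
      unfolding Qeq wip_diff_left wip_smult_left oddm by (simp add: wip_sym[of \<tau> t Pk Pm])
    show ?thesis
      unfolding qeq wip_add_right wip_smult_right w1 w2 w3 by simp
  qed
  show ?case using deg par orth by blast
qed


declare Q.simps(3) [simp del]

lemma Q_deg: "degree (Q \<tau> t n) = n" using Q_props[of \<tau> t n] by blast
lemma Q_lead: "coeff (Q \<tau> t n) n = 1" using Q_props[of \<tau> t n] by auto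
lemma Q_orth: "degree q < n \<Longrightarrow> wip \<tau> t (Q \<tau> t n) q = 0" using Q_props[of \<tau> t n] by blast
lemma Q_ne: "Q \<tau> t n \<noteq> 0" using Q_lead[of \<tau> t n] by auto

lemma is_mop_Q: "is_mop \<tau> t n (Q \<tau> t n)"
  using Q_props[of \<tau> t n] unfolding is_mop_def by (auto simp: degree_monom_eq)

lemma mop_unique:
  assumes "is_mop \<tau> t n p" "is_mop \<tau> t n p'"
  shows "p = p'"
proof (rule ccontr)
  assume ne: "p \<noteq> p'"
  have "degree (p - smult (coeff p n) p') < n \<or> p - smult (coeff p n) p' = 0"
    using assms unfolding is_mop_def by (intro deg_red0) auto
  moreover have "coeff p n = 1" using assms unfolding is_mop_def by auto
  ultimately have d: "degree (p - p') < n" using ne by auto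
  have "wip \<tau> t p (p - p') = 0" "wip \<tau> t p' (p - p') = 0"
    using assms d unfolding is_mop_def by (auto intro: wip_orth)
  then have "wip \<tau> t (p - p') (p - p') = 0" by (simp add: wip_diff_left)
  moreover have "wip \<tau> t (p - p') (p - p') > 0" using ne by (intro wip_pos) simp
  ultimately show False by simp
qed

lemma mop_Q: "mop \<tau> t n = Q \<tau> t n"
  unfolding mop_def by (rule the_equality) (auto intro: is_mop_Q mop_unique)

lemma beta_Q:
  assumes "k \<ge> 1"
  shows "beta \<tau> t (int k) = wip \<tau> t (Q \<tau> t k) (Q \<tau> t k) / wip \<tau> t (Q \<tau> t (k - 1)) (Q \<tau> t (k - 1))"
proof -
  obtain j where k: "k = Suc j" using assms by (cases k) auto
  define b0 where "b0 = wip \<tau> t (Q \<tau> t (Suc j)) (Q \<tau> t (Suc j)) / wip \<tau> t (Q \<tau> t j) (Q \<tau> t j)"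
  have "(THE b. Q \<tau> t (Suc (Suc j)) = [:0, 1:] * Q \<tau> t (Suc j) - smult b (Q \<tau> t j)) = b0"
  proof (rule the_equality)
    show "Q \<tau> t (Suc (Suc j)) = [:0, 1:] * Q \<tau> t (Suc j) - smult b0 (Q \<tau> t j)"
      by (simp add: Q.simps(3) b0_def)
  next
    fix b assume "Q \<tau> t (Suc (Suc j)) = [:0, 1:] * Q \<tau> t (Suc j) - smult b (Q \<tau> t j)"
    then have "smult b (Q \<tau> t j) = smult b0 (Q \<tau> t j)"
      by (simp add: Q.simps(3) b0_def)
    then have "coeff (smult b (Q \<tau> t j)) j = coeff (smult b0 (Q \<tau> t j)) j" by simp
    then show "b = b0" using Q_lead[of \<tau> t j] by simp
  qed
  then show ?thesis unfolding beta_def using k by (simp add: mop_Q b0_def del: of_nat_Suc)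
qed

definition PP :: "real \<Rightarrow> real \<Rightarrow> int \<Rightarrow> real poly" where
  "PP \<tau> t k = (if k < 0 then 0 else Q \<tau> t (nat k))"

definition hh :: "real \<Rightarrow> real \<Rightarrow> int \<Rightarrow> real" where
  "hh \<tau> t k = wip \<tau> t (PP \<tau> t k) (PP \<tau> t k)"

lemma PP_orth: "wip \<tau> t (PP \<tau> t i) (PP \<tau> t j) = (if i = j then hh \<tau> t i else 0)"
proof (cases "i = j")
  case True then show ?thesis by (simp add: hh_def)
next
  case False
  show ?thesis
  proof (cases "i < 0 \<or> j < 0")
    case True then show ?thesis using False by (auto simp: PP_def)
  next
    case nn: False
    show ?thesis
    proof (cases "i < j")
      case True
      then have "degree (Q \<tau> t (nat i)) < nat j" using nn by (simp add: Q_deg)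
      then have "wip \<tau> t (Q \<tau> t (nat j)) (Q \<tau> t (nat i)) = 0" by (rule Q_orth)
      then show ?thesis using False nn
        by (simp add: PP_def wip_sym[of \<tau> t "Q \<tau> t (nat i)"])
    next
      case False2: False
      then have "degree (Q \<tau> t (nat j)) < nat i" using nn False by (simp add: Q_deg)
      then have "wip \<tau> t (Q \<tau> t (nat i)) (Q \<tau> t (nat j)) = 0" by (rule Q_orth)
      then show ?thesis using False nn
        by (simp add: PP_def)
    qed
  qed
qed

lemma hh_pos: "k \<ge> 0 \<Longrightarrow> hh \<tau> t k > 0"
  unfolding hh_def PP_def using Q_ne[of \<tau> t "nat k"]
  by (auto intro!: wip_pos)

lemma beta_nonpos: "k \<le> 0 \<Longrightarrow> beta \<tau> t k = 0"
  by (simp add: beta_def)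

lemma beta_hh: "k \<ge> 1 \<Longrightarrow> beta \<tau> t k = hh \<tau> t k / hh \<tau> t (k - 1)"
proof -
  assume k: "k \<ge> 1"
  obtain m where m0: "k = int m" using nonneg_int_cases[of k] k by auto
  then have m: "k = int m" "m \<ge> 1" using k by auto
  have "nat (int m - 1) = m - 1" using m by simp
  then show ?thesis using m beta_Q[of m \<tau> t] by (simp add: hh_def PP_def)
qed

lemma Hrel: "beta \<tau> t k * beta \<tau> t k * hh \<tau> t (k - 1) = beta \<tau> t k * hh \<tau> t k"
proof (cases "k \<ge> 1")
  case True
  have "hh \<tau> t (k - 1) > 0" using True by (intro hh_pos) simp
  then show ?thesis using beta_hh[OF True, of \<tau> t] by simp
qed (simp add: beta_nonpos)

lemma recur:
  assumes "k \<ge> 0"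
  shows "[:0,1:] * PP \<tau> t k = PP \<tau> t (k + 1) + smult (beta \<tau> t k) (PP \<tau> t (k - 1))"
proof -
  obtain j where j: "k = int j" using assms nonneg_int_cases by blast
  show ?thesis
  proof (cases j)
    case 0 then show ?thesis using j by (simp add: PP_def beta_nonpos)
  next
    case (Suc i)
    have e1: "nat (int i + 2) = Suc (Suc i)" by simp
    have e2: "nat (1 + int i) = Suc i" by arith
    have "beta \<tau> t (int (Suc i)) = wip \<tau> t (Q \<tau> t (Suc i)) (Q \<tau> t (Suc i)) / wip \<tau> t (Q \<tau> t i) (Q \<tau> t i)"
      using beta_Q[of "Suc i" \<tau> t] by simp
    then show ?thesis using j Suc by (simp add: PP_def e1 e2 Q.simps(3) add.commute)
  qed
qed

lemma recur':
  "smult (beta \<tau> t (k + 1)) ([:0,1:] * PP \<tau> t k) =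
   smult (beta \<tau> t (k + 1)) (PP \<tau> t (k + 1) + smult (beta \<tau> t k) (PP \<tau> t (k - 1)))"
proof (cases "k \<ge> 0")
  case True then show ?thesis using recur[OF True] by simp
next
  case False
  show ?thesis
  proof (cases "k = -1")
    case True then show ?thesis by (simp add: beta_nonpos)
  next
    case False2: False
    then show ?thesis using False by (simp add: PP_def)
  qed
qed


lemma deriv_part:
  assumes n: "n \<ge> 1"
  shows "wip \<tau> t (pderiv (Q \<tau> t n * Q \<tau> t (n - 1))) 1 = real n * wip \<tau> t (Q \<tau> t (n - 1)) (Q \<tau> t (n - 1))"
proof -
  define Pn where "Pn = Q \<tau> t n"
  define Pk where "Pk = Q \<tau> t (n - 1)"
  have dPn: "degree Pn = n" and dPk: "degree Pk = n - 1" and lPk: "lead_coeff Pk = 1"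
    unfolding Pn_def Pk_def by (simp_all add: Q_deg Q_lead)
  have "degree (pderiv Pk) < n" using n by (simp add: degree_pderiv dPk)
  then have w1: "wip \<tau> t Pn (pderiv Pk) = 0" unfolding Pn_def by (rule Q_orth)
  have dd: "degree (pderiv Pn) = n - 1" by (simp add: degree_pderiv dPn)
  have cc: "coeff (pderiv Pn) (n - 1) = real n"
  proof -
    have "coeff (pderiv Pn) (n - 1) = of_nat (Suc (n - 1)) * coeff Pn (Suc (n - 1))"
      by (rule coeff_pderiv)
    also have "Suc (n - 1) = n" using n by simp
    finally show ?thesis unfolding Pn_def using Q_lead[of \<tau> t n] by simp
  qed
  define s where "s = pderiv Pn - smult (real n) Pk"
  have "degree s < n - 1 \<or> s = 0"
    unfolding s_def cc[symmetric] using dd dPk lPk by (intro deg_red0) auto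
  then have ws: "wip \<tau> t Pk s = 0" unfolding Pk_def by (auto intro: Q_orth)
  have pe: "pderiv Pn = smult (real n) Pk + s" unfolding s_def by simp
  have ws': "wip \<tau> t s Pk = 0" using ws wip_sym[of \<tau> t s Pk] by simp
  have w2: "wip \<tau> t (pderiv Pn) Pk = real n * wip \<tau> t Pk Pk"
    unfolding pe wip_add_left wip_smult_left ws' by simp
  show ?thesis
    unfolding Pn_def[symmetric] Pk_def[symmetric] pderiv_mult wip_add_left wip_mult1 w1
    using w2 wip_sym[of \<tau> t Pk "pderiv Pn"] by simp
qed

lemma wip_comb3:
  assumes "\<And>x. poly a x * poly b x = c1 * (poly a1 x * poly b1 x) + c2 * (poly a2 x * poly b2 x) + c3 * (poly a3 x * poly b3 x)"
  shows "wip \<tau> t a b = c1 * wip \<tau> t a1 b1 + c2 * wip \<tau> t a2 b2 + c3 * wip \<tau> t a3 b3"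
proof -
  have "wip \<tau> t a b = (\<integral>x. c1 * (poly a1 x * poly b1 x * weight \<tau> t x) + c2 * (poly a2 x * poly b2 x * weight \<tau> t x)
        + c3 * (poly a3 x * poly b3 x * weight \<tau> t x) \<partial>lborel)"
    unfolding wip_def
    by (intro Bochner_Integration.integral_cong refl) (simp add: assms algebra_simps)
  also have "\<dots> = c1 * wip \<tau> t a1 b1 + c2 * wip \<tau> t a2 b2 + c3 * wip \<tau> t a3 b3"
    unfolding wip_def by (simp add: integrable_wip)
  finally show ?thesis .
qed


theorem lemma3p1:
  fixes \<tau> t :: real and n :: nat
  assumes "n \<ge> 1"
  defines "b \<equiv> (\<lambda>k::int. beta \<tau> t (int n + k))"
  shows "6 * b 0 * (b (-2) * b (-1) + (b (-1))^2 + 2 * b (-1) * b 0 + b (-1) * b 1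
            + (b 0)^2 + 2 * b 0 * b 1 + (b 1)^2 + b 1 * b 2)
         - 4 * \<tau> * b 0 * (b (-1) + b 0 + b 1) - 2 * t * b 0 = real n"
proof -
  define N where "N = int n"
  have N1: "N \<ge> 1" using assms(1) N_def by simp
  define p where "p k = PP \<tau> t (N + k)" for k
  define H where "H k = hh \<tau> t (N + k)" for k
  have bB: "b k = beta \<tau> t (N + k)" for k by (simp add: b_def N_def)
  have rec: "[:0,1:] * p k = p (k+1) + smult (b k) (p (k-1))" if "k \<ge> -N" for k
    using recur[of "N + k" \<tau> t] that by (simp add: p_def bB add.assoc add_diff_eq)
  have rec': "smult (b (k+1)) ([:0,1:] * p k) = smult (b (k+1)) (p (k+1) + smult (b k) (p (k-1)))" for k
    using recur'[of \<tau> t "N + k"] by (simp add: p_def bB add.assoc add_diff_eq)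
  have orth: "wip \<tau> t (p i) (p j) = (if i = j then H i else 0)" for i j
    by (simp add: p_def H_def PP_orth)
  have Hpos: "H k > 0" if "k \<ge> -N" for k using hh_pos[of "N + k" \<tau> t] that by (simp add: H_def)
  have Hr: "b k * b k * H (k - 1) = b k * H k" for k
    using Hrel[of \<tau> t "N + k"] by (simp add: bB H_def add_diff_eq)
  have bH: "b k * H (k - 1) = H k" if "k \<ge> 1 - N" for k
  proof -
    have "H (k - 1) > 0" using that by (intro Hpos) simp
    moreover have "b k = H k / H (k - 1)" using beta_hh[of "N + k" \<tau> t] that
      by (simp add: bB H_def add_diff_eq)
    ultimately show ?thesis by simp
  qed
  have p0: "p 0 = Q \<tau> t n" by (simp add: p_def PP_def N_def)
  have pm1: "p (-1) = Q \<tau> t (n - 1)"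
  proof -
    have "nat (int n - 1) = n - 1" using assms(1) by simp
    then show ?thesis using assms(1) by (simp add: p_def PP_def N_def)
  qed
  have "H (-1) = wip \<tau> t (p (-1)) (p (-1))" by (simp only: H_def hh_def p_def)
  then have Hm1: "H (-1) = wip \<tau> t (Q \<tau> t (n - 1)) (Q \<tau> t (n - 1))" unfolding pm1 .
  have E0: "real n * H (-1) = wip \<tau> t (p 0) (p (-1) * Vp \<tau> t)"
    unfolding Hm1 deriv_part[OF assms(1), symmetric] ibp p0 pm1 wip_mult_assoc ..
  define A where "A = p 2 + smult (b 1 + b 0) (p 0) + smult (b 0 * b (-1)) (p (-2))"
  define Bp where "Bp = p 2 + smult (b 1 + b 0 + b (-1)) (p 0)
     + smult ((b 0 + b (-1)) * b (-1) + b (-1) * b (-2)) (p (-2)) + smult (b (-1) * b (-2) * b (-3)) (p (-4))"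
  define C where "C = p 1 + smult (b 0) (p (-1))"
  define D where "D = p 1 + smult (b 0 + b (-1)) (p (-1)) + smult (b (-1) * b (-2)) (p (-3))"
  define F where "F = p 0 + smult (b (-1)) (p (-2))"
  have pw: "poly (p 0) x * poly (p (-1) * Vp \<tau> t) x = 6 * (poly A x * poly Bp x)
     + (-4*\<tau>) * (poly C x * poly D x) + (-2*t) * (poly (p 0) x * poly F x)" for x
  proof -
    define q where "q k = poly (p k) x" for k
    have r0: "x * q 0 = q 1 + b 0 * q (-1)"
      using arg_cong[OF rec[of 0], of "\<lambda>r. poly r x"] N1 by (simp add: q_def)
    have r1: "x * q 1 = q 2 + b 1 * q 0"
      using arg_cong[OF rec[of 1], of "\<lambda>r. poly r x"] N1 by (simp add: q_def)
    have r2: "x * q (-1) = q 0 + b (-1) * q (-2)"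
      using arg_cong[OF rec[of "-1"], of "\<lambda>r. poly r x"] N1 by (simp add: q_def)
    have r3: "b (-1) * (x * q (-2)) = b (-1) * (q (-1) + b (-2) * q (-3))"
      using arg_cong[OF rec'[of "-2"], of "\<lambda>r. poly r x"] by (simp add: q_def)
    have r4: "b (-2) * (x * q (-3)) = b (-2) * (q (-2) + b (-3) * q (-4))"
      using arg_cong[OF rec'[of "-3"], of "\<lambda>r. poly r x"] by (simp add: q_def)
    have eA: "x^2 * q 0 = poly A x"
    proof -
      have "x^2 * q 0 = x * (x * q 0)" by (simp add: power2_eq_square)
      also have "\<dots> = x * q 1 + b 0 * (x * q (-1))" unfolding r0 by (simp add: algebra_simps)
      also have "\<dots> = poly A x" unfolding r1 r2 A_def by (simp add: q_def algebra_simps)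
      finally show ?thesis .
    qed
    have eC: "x * q 0 = poly C x" unfolding r0 C_def by (simp add: q_def)
    have eF: "x * q (-1) = poly F x" unfolding r2 F_def by (simp add: q_def)
    have eD: "x^2 * q (-1) = poly D x"
    proof -
      have "x^2 * q (-1) = x * (x * q (-1))" by (simp add: power2_eq_square)
      also have "\<dots> = x * q 0 + b (-1) * (x * q (-2))" unfolding r2 by (simp add: algebra_simps)
      also have "\<dots> = poly D x" unfolding r0 r3 D_def by (simp add: q_def algebra_simps)
      finally show ?thesis .
    qed
    have eB: "x^3 * q (-1) = poly Bp x"
    proof -
      have "x^3 * q (-1) = x * (x^2 * q (-1))" by (simp add: power3_eq_cube power2_eq_square)
      also have "\<dots> = x * poly D x" by (simp only: eD)
      also have "\<dots> = x * q 1 + (b 0 + b (-1)) * (x * q (-1)) + b (-1) * (b (-2) * (x * q (-3)))"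
        by (simp add: D_def q_def algebra_simps)
      also have "\<dots> = poly Bp x" unfolding r1 r2 r4 Bp_def by (simp add: q_def algebra_simps)
      finally show ?thesis .
    qed
    have "poly (p 0) x * poly (p (-1) * Vp \<tau> t) x
      = 6 * ((x^2 * q 0) * (x^3 * q (-1))) + (-4*\<tau>) * ((x * q 0) * (x^2 * q (-1))) + (-2*t) * (q 0 * (x * q (-1)))"
      by (simp add: q_def poly_Vp algebra_simps power_numeral_reduce)
    then show ?thesis unfolding eA eB eC eD eF by (simp add: q_def)
  qed
  have E1: "wip \<tau> t (p 0) (p (-1) * Vp \<tau> t) = 6 * wip \<tau> t A Bp + (-4*\<tau>) * wip \<tau> t C D + (-2*t) * wip \<tau> t (p 0) F"
    by (rule wip_comb3[OF pw])
  have wA: "wip \<tau> t A Bp = H 2 + (b 1 + b 0) * (b 1 + b 0 + b (-1)) * H 0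
      + b 0 * b (-1) * ((b 0 + b (-1)) * b (-1) + b (-1) * b (-2)) * H (-2)"
    unfolding A_def Bp_def
    by (simp add: wip_add_left wip_add_right wip_smult_left wip_smult_right orth)
  have wC: "wip \<tau> t C D = H 1 + b 0 * (b 0 + b (-1)) * H (-1)"
    unfolding C_def D_def
    by (simp add: wip_add_left wip_add_right wip_smult_left wip_smult_right orth)
  have wF: "wip \<tau> t (p 0) F = H 0"
    unfolding F_def
    by (simp add: wip_add_left wip_add_right wip_smult_left wip_smult_right orth)
  have h0: "H 0 = b 0 * H (-1)" using bH[of 0] N1 by simp
  have h1: "H 1 = b 1 * H 0" using bH[of 1] N1 by simp
  have h2: "H 2 = b 2 * H 1" using bH[of 2] N1 by simp
  have hm2: "b (-1) * b (-1) * H (-2) = b (-1) * H (-1)" using Hr[of "-1"] by simp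
  have hpos: "H (-1) > 0" using Hpos[of "-1"] N1 by simp
  have key: "real n * H (-1) = H (-1) * (6 * b 0 * (b (-2) * b (-1) + (b (-1))^2 + 2 * b (-1) * b 0 + b (-1) * b 1
            + (b 0)^2 + 2 * b 0 * b 1 + (b 1)^2 + b 1 * b 2)
         - 4 * \<tau> * b 0 * (b (-1) + b 0 + b 1) - 2 * t * b 0)"
  proof -
    have "b 0 * b (-1) * ((b 0 + b (-1)) * b (-1) + b (-1) * b (-2)) * H (-2)
        = b 0 * (b 0 + b (-1) + b (-2)) * (b (-1) * b (-1) * H (-2))" by (simp add: algebra_simps)
    also have "\<dots> = b 0 * (b 0 + b (-1) + b (-2)) * (b (-1) * H (-1))" by (simp only: hm2)
    finally have t2: "b 0 * b (-1) * ((b 0 + b (-1)) * b (-1) + b (-1) * b (-2)) * H (-2)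
        = b 0 * (b 0 + b (-1) + b (-2)) * (b (-1) * H (-1))" .
    show ?thesis
      unfolding E0 E1 wA wC wF t2 h2 h1 h0
      by (simp add: algebra_simps power2_eq_square)
  qed
  show ?thesis using key hpos by simp
qed
end
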